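(* Let $J\subset \mathbb{K}[x_0,\ldots,x_n]$ be a saturated Borel-fixed ideal such that $\mathbb{K}[x_0,\ldots,x_n]/J$ has Hilbert polynomial $p(t)$, and let $r$ be the Gotzmann number of $p(t)$. Let $\{J_r\}\subset\mathcal{P}^n_r$ be the set of monomials of degree $r$ in $J$, and let $x^\beta\in\{J_r\}$ be a minimal element of $\{J_r\}$ with respect to the Borel order $\leq_B$ such that $x_0\mid x^\beta$. Then the ideal $I=\langle \{J_r\}\setminus\{x^\beta\}\rangle^{\mathrm{sat}}$ is Borel-fixed and $\mathbb{K}[x_0,\ldots,x_n]/I$ has Hilbert polynomial $p(t)+1$.
   Context: $\mathbb{K}$ is a field of characteristic $0$, and the variables of $\mathbb{K}[x_0,\ldots,x_n]$ are ordered $x_n>x_{n-1}>\cdots>x_0$. The Hilbert polynomial of a homogeneous ideal $I$ means the Hilbert polynomial of $\mathbb{K}[x]/I$, i.e. $p(t)=\dim_\mathbb{K}\mathbb{K}[x]_t/I_t$ for $t\gg0$. A homogeneous ideal is Borel-fixed iff it is a monomial ideal such that whenever $x^\alpha\in I$, $x_i\mid x^\alpha$ and $j>i$, then $\frac{x_j}{x_i}x^\alpha\in I$. $\mathcal{P}^n_r$ denotes the set of monomials of degree $r$ in $x_0,\ldots,x_n$, partially ordered by the Borel order $\leq_B$: the transitive closure of the relations $\frac{x_{i+1}}{x_i}x^\alpha>_B x^\alpha$ for all monomials $x^\alpha$ and all $i$ with $x_i\mid x^\alpha$. For a set $S$ of monomials, $\langle S\rangle$ is the ideal it generates and $\langle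 S\rangle^{\mathrm{sat}}$ its saturation with respect to the irrelevant ideal $(x_0,\ldots,x_n)$. Every admissible Hilbert polynomial has a unique Gotzmann decomposition $p(t)=\binom{t+a_1}{a_1}+\binom{t+a_2-1}{a_2}+\cdots+\binom{t+a_r-(r-1)}{a_r}$ with $a_1\geq\cdots\geq a_r\geq 0$; the number $r$ of summands is the Gotzmann number of $p(t)$. *)

theory Defs
  imports Complex_Main "HOL-Computational_Algebra.Polynomial"
begin

text \<open>Monomials of K[x_0,...,x_n] are represented by their exponent vectors
  a :: nat => nat with a i = 0 for i > n.  Monomial ideals are represented by
  the set of monomials they contain (a monomial ideal is determined by, and has
  as K-basis, its monomials).\<close>

definition mons :: "nat \<Rightarrow> (nat \<Rightarrow> nat) set" where
  "mons n = {a. \<forall>i>n. a i = 0}"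

definition mdeg :: "nat \<Rightarrow> (nat \<Rightarrow> nat) \<Rightarrow> nat" where
  "mdeg n a = (\<Sum>i\<le>n. a i)"

definition mons_deg :: "nat \<Rightarrow> nat \<Rightarrow> (nat \<Rightarrow> nat) set" where
  "mons_deg n t = {a \<in> mons n. mdeg n a = t}"

definition mdvd :: "(nat \<Rightarrow> nat) \<Rightarrow> (nat \<Rightarrow> nat) \<Rightarrow> bool" where
  "mdvd a b \<longleftrightarrow> (\<forall>i. a i \<le> b i)"

definition mon_ideal :: "nat \<Rightarrow> (nat \<Rightarrow> nat) set \<Rightarrow> bool" where
  "mon_ideal n J \<longleftrightarrow> J \<subseteq> mons n \<and> (\<forall>a\<in>J. \<forall>b\<in>mons n. (\<lambda>i. a i + b i) \<in> J)"

definition mgen :: "nat \<Rightarrow> (nat \<Rightarrow> nat) set \<Rightarrow> (nat \<Rightarrow> nat) set" where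
  "mgen n S = {a \<in> mons n. \<exists>s\<in>S. mdvd s a}"

text \<open>saturation w.r.t. the irrelevant ideal (x_0,...,x_n): a monomial x^a lies in
  I : (x_0,...,x_n)^\<infinity> iff x^a * (x_0,...,x_n)^k \<subseteq> I for some k\<close>
definition msat :: "nat \<Rightarrow> (nat \<Rightarrow> nat) set \<Rightarrow> (nat \<Rightarrow> nat) set" where
  "msat n I = {a \<in> mons n. \<exists>k. \<forall>m\<in>mons_deg n k. (\<lambda>i. a i + m i) \<in> I}"

definition mmove :: "(nat \<Rightarrow> nat) \<Rightarrow> nat \<Rightarrow> nat \<Rightarrow> (nat \<Rightarrow> nat)" where
  "mmove a i j = (a(i := a i - 1))(j := a j + 1)"

definition borel_fixed :: "nat \<Rightarrow> (nat \<Rightarrow> nat) set \<Rightarrow> bool" where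
  "borel_fixed n J \<longleftrightarrow> mon_ideal n J \<and>
     (\<forall>a\<in>J. \<forall>i j. 0 < a i \<and> i < j \<and> j \<le> n \<longrightarrow> mmove a i j \<in> J)"

definition borel_step :: "nat \<Rightarrow> (nat \<Rightarrow> nat) \<Rightarrow> (nat \<Rightarrow> nat) \<Rightarrow> bool" where
  "borel_step n a b \<longleftrightarrow> a \<in> mons n \<and> (\<exists>i. i < n \<and> 0 < a i \<and> b = mmove a i (Suc i))"

definition borel_le :: "nat \<Rightarrow> (nat \<Rightarrow> nat) \<Rightarrow> (nat \<Rightarrow> nat) \<Rightarrow> bool" where
  "borel_le n = (borel_step n)\<^sup>*\<^sup>*"

text \<open>Hilbert function of K[x]/I: number of degree-t monomials not in I
  (these form a K-basis of K[x]_t / I_t for a monomial ideal I)\<close>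
definition hilb_fun :: "nat \<Rightarrow> (nat \<Rightarrow> nat) set \<Rightarrow> nat \<Rightarrow> nat" where
  "hilb_fun n I t = card (mons_deg n t - I)"

definition has_hilb_poly :: "nat \<Rightarrow> (nat \<Rightarrow> nat) set \<Rightarrow> real poly \<Rightarrow> bool" where
  "has_hilb_poly n I p \<longleftrightarrow> (\<exists>t0. \<forall>t\<ge>t0. real (hilb_fun n I t) = poly p (real t))"

text \<open>Gotzmann decomposition p(t) = \<Sum>_{i=1}^r binom(t+a_i-(i-1), a_i), a_1 \<ge> ... \<ge> a_r \<ge> 0
  (list index i here is 0-based, so the shift is i); the identity is one of
  polynomials in t, equivalently of values at all natural t.\<close>
definition gotzmann_decomp :: "real poly \<Rightarrow> nat list \<Rightarrow> bool" where
  "gotzmann_decomp p as \<longleftrightarrow> sorted_wrt (\<ge>) as \<and>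
     (\<forall>t::nat. poly p (real t) =
        (\<Sum>i<length as. (real t + real (as ! i) - real i) gchoose (as ! i)))"

definition gotzmann_number :: "real poly \<Rightarrow> nat" where
  "gotzmann_number p = (THE r. \<exists>as. gotzmann_decomp p as \<and> length as = r)"

end

theory Submission
  imports Defs
begin


lemma mdeg_upd: "k \<le> n \<Longrightarrow> mdeg n (a(k:=x)) + a k = mdeg n a + x"
proof -
  assume k: "k \<le> n"
  have "mdeg n (a(k:=x)) = x + (\<Sum>i\<in>{..n}-{k}. a i)"
    unfolding mdeg_def using k by (simp add: sum.remove[of "{..n}" k])
  moreover have "mdeg n a = a k + (\<Sum>i\<in>{..n}-{k}. a i)"
    unfolding mdeg_def using k by (simp add: sum.remove[of "{..n}" k])
  ultimately show ?thesis by simp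
qed

lemma mdeg_mono: "mdvd a b \<Longrightarrow> mdeg n a \<le> mdeg n b"
  unfolding mdvd_def mdeg_def by (simp add: sum_mono)

lemma mdvd_eq: assumes "mdvd a b" "b \<in> mons n" "mdeg n a = mdeg n b" shows "a = b"
proof (rule ccontr)
  assume "a \<noteq> b"
  then obtain i where i: "a i \<noteq> b i" by auto
  have "i \<le> n"
  proof (rule ccontr)
    assume "\<not> i \<le> n" then have "b i = 0" using assms by (simp add: mons_def)
    moreover have "a i \<le> b i" using assms by (simp add: mdvd_def)
    ultimately show False using i by simp
  qed
  with i assms(1) have "a i < b i" unfolding mdvd_def by (simp add: le_neq_implies_less)
  hence "mdeg n a < mdeg n b" unfolding mdeg_def using assms(1) \<open>i \<le> n\<close>
    by (intro sum_strict_mono_ex1) (auto simp: mdvd_def)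
  with assms(3) show False by simp
qed

lemma mdvd_refl[simp]: "mdvd a a" by (simp add: mdvd_def)
lemma mdvd_trans: "mdvd a b \<Longrightarrow> mdvd b c \<Longrightarrow> mdvd a c"
  unfolding mdvd_def using le_trans by blast

lemma mons_down: assumes "mdvd a b" "b \<in> mons n" shows "a \<in> mons n"
  unfolding mons_def
proof (intro CollectI allI impI)
  fix i assume "n < i" then have "b i = 0" using assms(2) by (simp add: mons_def)
  then show "a i = 0" using assms(1) unfolding mdvd_def by (metis le_zero_eq)
qed

lemma interm:
  assumes "mdvd h w" "w \<in> mons n" "mdeg n h \<le> e" "e \<le> mdeg n w"
  shows "\<exists>c. mdvd h c \<and> mdvd c w \<and> mdeg n c = e"
  using assms(3,4)
proof (induction e rule: nat_induct_at_least)
  case base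
  show ?case using assms(1) by (intro exI[of _ h]) simp
next
  case (Suc m)
  then obtain c where c: "mdvd h c" "mdvd c w" "mdeg n c = m" by auto
  have "c \<noteq> w" using c Suc by auto
  then obtain i where i: "c i \<noteq> w i" by auto
  have "i \<le> n"
  proof (rule ccontr)
    assume "\<not> i \<le> n" then have "w i = 0" using assms by (simp add: mons_def)
    moreover have "c i \<le> w i" using c by (simp add: mdvd_def)
    ultimately show False using i by simp
  qed
  with i c have lt: "c i < w i" unfolding mdvd_def by (simp add: le_neq_implies_less)
  let ?c = "c(i := c i + 1)"
  have "mdvd h ?c" using c unfolding mdvd_def by (simp add: le_SucI)
  moreover have "mdvd ?c w" using c lt unfolding mdvd_def by auto
  moreover have "mdeg n ?c = Suc m" using mdeg_upd[OF \<open>i \<le> n\<close>, of c "c i + 1"] c by simp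
  ultimately show ?case by blast
qed

lemma finite_deg: "finite {a \<in> mons n. mdeg n a \<le> B}"
proof -
  have "{a \<in> mons n. mdeg n a \<le> B} \<subseteq> {f. \<forall>x. (x \<in> {..n} \<longrightarrow> f x \<in> {..B}) \<and> (x \<notin> {..n} \<longrightarrow> f x = 0)}"
  proof (intro subsetI CollectI allI conjI impI)
    fix a x assume a: "a \<in> {a \<in> mons n. mdeg n a \<le> B}"
    { assume "x \<in> {..n}"
    then have "a x \<le> mdeg n a" unfolding mdeg_def 
      by (intro member_le_sum) auto
    then show "a x \<in> {..B}" using a by simp }
    { assume "x \<notin> {..n}" then show "a x = 0" using a by (simp add: mons_def) }
  qed
  then show ?thesis by (rule finite_subset) (intro finite_set_of_finite_funs; simp)
qed

lemma finite_mons_deg: "finite (mons_deg n t)"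
  by (rule finite_subset[OF _ finite_deg[of n t]]) (auto simp: mons_deg_def)

lemma mmove_mons: "a \<in> mons n \<Longrightarrow> j \<le> n \<Longrightarrow> mmove a i j \<in> mons n"
  unfolding mons_def mmove_def by auto

lemma mdeg_mmove: assumes "0 < a i" "i \<le> n" "j \<le> n" "i \<noteq> j"
  shows "mdeg n (mmove a i j) = mdeg n a"
proof -
  have 1: "mdeg n (a(i := a i - 1)) + a i = mdeg n a + (a i - 1)" by (rule mdeg_upd[OF assms(2)])
  have 2: "mdeg n ((a(i := a i - 1))(j := a j + 1)) + (a(i := a i - 1)) j = mdeg n (a(i := a i - 1)) + (a j + 1)"
    by (rule mdeg_upd[OF assms(3)])
  from 1 2 assms show ?thesis unfolding mmove_def by simp
qed



definition Htr :: "nat list \<Rightarrow> nat \<Rightarrow> nat" where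
  "Htr as t = (\<Sum>i<length as. if i \<le> t then (t + as!i - i) choose (as!i) else 0)"

definition Hc :: "nat \<Rightarrow> nat list \<Rightarrow> nat \<Rightarrow> nat" where
  "Hc c as t = (\<Sum>i<length as. (t + c + as!i - i) choose (as!i))"

lemma Htr_snoc: "Htr (xs @ [a]) t = Htr xs t + (if length xs \<le> t then (t + a - length xs) choose a else 0)"
proof -
  have "Htr (xs @ [a]) t = (\<Sum>i<length xs. if i \<le> t then (t + (xs@[a])!i - i) choose ((xs@[a])!i) else 0)
     + (if length xs \<le> t then (t + a - length xs) choose a else 0)"
    unfolding Htr_def by simp
  also have "(\<Sum>i<length xs. if i \<le> t then (t + (xs@[a])!i - i) choose ((xs@[a])!i) else 0) = Htr xs t"
    unfolding Htr_def by (intro sum.cong) (auto simp: nth_append)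
  finally show ?thesis .
qed

lemma Hc_snoc: "Hc c (xs @ [a]) t = Hc c xs t + ((t + c + a - length xs) choose a)"
proof -
  have "Hc c (xs @ [a]) t = (\<Sum>i<length xs. (t + c + (xs@[a])!i - i) choose ((xs@[a])!i))
     + ((t + c + a - length xs) choose a)"
    unfolding Hc_def by simp
  also have "(\<Sum>i<length xs. (t + c + (xs@[a])!i - i) choose ((xs@[a])!i)) = Hc c xs t"
    unfolding Hc_def by (intro sum.cong) (auto simp: nth_append)
  finally show ?thesis .
qed

lemma replicate_snoc: "replicate (Suc z) x = replicate z x @ [x]"
  by (induction z) auto

lemma Htr_zeros: "Htr (xs @ replicate z 0) t = Htr xs t + min z (Suc t - length xs)"
proof (induction z)
  case 0 then show ?case by simp
next
  case (Suc z)
  have "Htr (xs @ replicate (Suc z) 0) t = Htr ((xs @ replicate z 0) @ [0]) t"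
    by (simp only: replicate_snoc append_assoc)
  also have "\<dots> = Htr xs t + min z (Suc t - length xs) + (if length xs + z \<le> t then 1 else 0)"
    by (simp only: Htr_snoc Suc) simp
  also have "\<dots> = Htr xs t + min (Suc z) (Suc t - length xs)" by auto
  finally show ?case .
qed

lemma Htr_term: "(if i \<le> Suc t then (Suc t + Suc b - i) choose Suc b else 0) =
   (if i \<le> t then (t + Suc b - i) choose Suc b else 0) + (if i \<le> Suc t then (Suc t + b - i) choose b else 0)"
proof (cases "i \<le> t")
  case True
  then have "Suc t + Suc b - i = Suc (t + Suc b - i)" "Suc t + b - i = t + Suc b - i" by auto
  then show ?thesis using True by simp
next
  case False
  then show ?thesis by (cases "i = Suc t") auto
qed

lemma Htr_sum: "(\<Sum>s\<le>t. Htr bs s) = Htr (map Suc bs) t"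
proof (induction t)
  case 0
  have "(\<Sum>s\<le>0. Htr bs s) = Htr bs 0" by simp
  also have "\<dots> = Htr (map Suc bs) 0" unfolding Htr_def length_map
    by (intro sum.cong refl) auto
  finally show ?case .
next
  case (Suc t)
  have "Htr (map Suc bs) (Suc t) = Htr (map Suc bs) t + Htr bs (Suc t)"
    unfolding Htr_def length_map sum.distrib[symmetric]
    by (intro sum.cong refl) (simp only: nth_map lessThan_iff Htr_term)
  then show ?case using Suc by simp
qed

lemma Htr_Hc: "length as \<le> Suc t \<Longrightarrow> Htr as t = Hc 0 as t"
  unfolding Htr_def Hc_def by (intro sum.cong) auto

lemma Hc_zeros: "Hc c (xs @ replicate z 0) t = Hc c xs t + z"
proof (induction z)
  case 0 then show ?case by simp
next
  case (Suc z)
  have "Hc c (xs @ replicate (Suc z) 0) t = Hc c ((xs @ replicate z 0) @ [0]) t"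
    by (simp only: replicate_snoc append_assoc)
  then show ?case using Suc by (simp only: Hc_snoc) simp
qed

lemma Hc_delta: assumes "length ds \<le> t + c"
  shows "Hc c (map Suc ds) (Suc t) = Hc c (map Suc ds) t + Hc (Suc c) ds t"
  unfolding Hc_def
proof (simp only: sum.distrib[symmetric] length_map, intro sum.cong refl)
  fix i assume "i \<in> {..<length ds}"
  with assms have i: "i \<le> t + c" by auto
  define m where "m = t + c + ds!i - i"
  have e1: "Suc t + c + Suc (ds!i) - i = Suc (Suc m)" using i by (auto simp: m_def)
  have e2: "t + c + Suc (ds!i) - i = Suc m" using i by (auto simp: m_def)
  have e3: "t + Suc c + ds ! i - i = Suc m" using i by (auto simp: m_def)
  show "(Suc t + c + map Suc ds ! i - i choose map Suc ds ! i) =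
         (t + c + map Suc ds ! i - i choose map Suc ds ! i) + (t + Suc c + ds ! i - i choose ds ! i)"
    using \<open>i \<in> {..<length ds}\<close> by (simp only: nth_map lessThan_iff e1 e2 e3 binomial_Suc_Suc)
qed

lemma sorted_split: "sorted_wrt (\<ge>) as \<Longrightarrow> \<exists>ds z. as = map Suc ds @ replicate z 0 \<and> sorted_wrt (\<ge>) ds"
proof (induction as)
  case Nil
  then show ?case by (intro exI[of _ "[]"] exI[of _ 0]) simp
next
  case (Cons a as)
  show ?case
  proof (cases a)
    case 0
    with Cons.prems have "\<forall>x\<in>set as. x = 0" by auto
    then have "as = replicate (length as) 0" by (simp add: list_eq_iff_nth_eq)
    then show ?thesis using 0 by (intro exI[of _ "[]"] exI[of _ "Suc (length as)"]) simp
  next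
    case (Suc a')
    from Cons obtain ds z where dz: "as = map Suc ds @ replicate z 0" "sorted_wrt (\<ge>) ds" by auto
    have "\<forall>d\<in>set ds. d \<le> a'" using Cons.prems dz(1) Suc by auto
    then show ?thesis using dz Suc by (intro exI[of _ "a' # ds"] exI[of _ z]) auto
  qed
qed

lemma Hc_unique_aux:
  "\<forall>as bs c. length as + length bs + sum_list as + sum_list bs = m \<longrightarrow>
     sorted_wrt (\<ge>) as \<longrightarrow> sorted_wrt (\<ge>) bs \<longrightarrow>
     (\<exists>T. \<forall>t\<ge>T. Hc c as t = Hc c bs t) \<longrightarrow> as = bs"
proof (induction m rule: less_induct)
  case (less m)
  show ?case
  proof (intro allI impI)
    fix as bs c
    assume m: "length as + length bs + sum_list as + sum_list bs = m"
      and sa: "sorted_wrt (\<ge>) as" and sb: "sorted_wrt (\<ge>) bs"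
      and ev: "\<exists>T. \<forall>t\<ge>T. Hc c as t = Hc c bs t"
    show "as = bs"
    proof (cases "as = [] \<and> bs = []")
      case True then show ?thesis by simp
    next
      case False
      obtain ds1 z1 where d1: "as = map Suc ds1 @ replicate z1 0" "sorted_wrt (\<ge>) ds1"
        using sorted_split[OF sa] by auto
      obtain ds2 z2 where d2: "bs = map Suc ds2 @ replicate z2 0" "sorted_wrt (\<ge>) ds2"
        using sorted_split[OF sb] by auto
      obtain T where T: "\<forall>t\<ge>T. Hc c as t = Hc c bs t" using ev by auto
      have "\<forall>t\<ge>T + length ds1 + length ds2. Hc (Suc c) ds1 t = Hc (Suc c) ds2 t"
      proof (intro allI impI)
        fix t assume t: "T + length ds1 + length ds2 \<le> t"
        have "Hc c as (Suc t) = Hc c bs (Suc t)" "Hc c as t = Hc c bs t" using T t by auto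
        then have "Hc c (map Suc ds1) (Suc t) + z1 = Hc c (map Suc ds2) (Suc t) + z2"
          "Hc c (map Suc ds1) t + z1 = Hc c (map Suc ds2) t + z2"
          using d1 d2 by (simp_all add: Hc_zeros)
        then show "Hc (Suc c) ds1 t = Hc (Suc c) ds2 t"
          using Hc_delta[of ds1 t c] Hc_delta[of ds2 t c] t by simp
      qed
      moreover have "length ds1 + length ds2 + sum_list ds1 + sum_list ds2 < m"
      proof -
        have "sum_list (map Suc ds1) = length ds1 + sum_list ds1" by (induction ds1) auto
        moreover have "sum_list (map Suc ds2) = length ds2 + sum_list ds2" by (induction ds2) auto
        ultimately show ?thesis using m d1 d2 False by auto
      qed
      ultimately have "ds1 = ds2" using less d1(2) d2(2) by blast
      moreover have "z1 = z2"
      proof -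
        have "Hc c as T = Hc c bs T" using T by auto
        then show ?thesis using d1 d2 \<open>ds1 = ds2\<close> by (simp add: Hc_zeros)
      qed
      ultimately show ?thesis using d1 d2 by simp
    qed
  qed
qed

lemma Hc_unique: "sorted_wrt (\<ge>) as \<Longrightarrow> sorted_wrt (\<ge>) bs \<Longrightarrow> \<forall>t\<ge>T. Hc c as t = Hc c bs t \<Longrightarrow> as = bs"
  using Hc_unique_aux by blast



definition monk :: "nat \<Rightarrow> nat \<Rightarrow> (nat \<Rightarrow> nat) set" where
  "monk k n = {a. \<forall>i. (i < k \<or> n < i) \<longrightarrow> a i = 0}"

definition std :: "nat \<Rightarrow> nat \<Rightarrow> (nat \<Rightarrow> nat) set \<Rightarrow> bool" where
  "std k n N \<longleftrightarrow> N \<subseteq> monk k n \<and> (\<forall>u\<in>N. \<forall>v. mdvd v u \<longrightarrow> v \<in> N) \<and>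
     (\<forall>u\<in>N. \<forall>i j. k \<le> i \<and> i < j \<and> 0 < u j \<longrightarrow> mmove u j i \<in> N)"

definition cntle :: "nat \<Rightarrow> (nat \<Rightarrow> nat) set \<Rightarrow> nat \<Rightarrow> nat" where
  "cntle n N t = card {u \<in> N. mdeg n u \<le> t}"

definition InvP :: "nat \<Rightarrow> nat \<Rightarrow> bool" where
  "InvP k n \<longleftrightarrow> (\<forall>N. std k n N \<longrightarrow> (\<exists>as. sorted_wrt (\<ge>) as \<and> (\<forall>t. Htr as t \<le> cntle n N t) \<and>
      (\<forall>t. length as \<le> Suc t \<longrightarrow> cntle n N t = Htr as t) \<and>
      (\<forall>u\<in>monk k n. u \<notin> N \<longrightarrow> (\<exists>v. mdvd v u \<and> v \<notin> N \<and> mdeg n v \<le> length as))))"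

lemma monk_mons: "monk k n \<subseteq> mons n"
  unfolding monk_def mons_def by auto

lemma monk_down: assumes "mdvd v u" "u \<in> monk k n" shows "v \<in> monk k n"
  unfolding monk_def
proof (intro CollectI allI impI)
  fix i assume "i < k \<or> n < i" then have "u i = 0" using assms(2) unfolding monk_def by blast
  then show "v i = 0" using assms(1) unfolding mdvd_def by (metis le_zero_eq)
qed

lemma finite_cnt: "N \<subseteq> monk k n \<Longrightarrow> finite {u\<in>N. mdeg n u \<le> t}"
  by (rule finite_subset[OF _ finite_deg[of n t]]) (use monk_mons in blast)

lemma chain_card:
  assumes "mdvd h w" "w \<in> mons n" "finite D"
    "\<And>c. mdvd h c \<Longrightarrow> mdvd c w \<Longrightarrow> mdeg n c \<le> t \<Longrightarrow> c \<in> D"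
  shows "Suc (min t (mdeg n w)) - mdeg n h \<le> card {c\<in>D. mdeg n c \<le> t}"
proof (cases "mdeg n h \<le> min t (mdeg n w)")
  case False then show ?thesis by (simp add: min_def split: if_splits)
next
  case True
  define m where "m = min t (mdeg n w)"
  define f where "f e = (SOME c. mdvd h c \<and> mdvd c w \<and> mdeg n c = e)" for e
  have fp: "mdvd h (f e) \<and> mdvd (f e) w \<and> mdeg n (f e) = e" if "e \<in> {mdeg n h..m}" for e
  proof -
    have "\<exists>c. mdvd h c \<and> mdvd c w \<and> mdeg n c = e"
      using that interm[OF assms(1,2)] by (auto simp: m_def)
    then show ?thesis unfolding f_def by (rule someI_ex)
  qed
  have "inj_on f {mdeg n h..m}"
    by (rule inj_onI) (metis fp)
  moreover have "f ` {mdeg n h..m} \<subseteq> {c\<in>D. mdeg n c \<le> t}"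
  proof
    fix c assume "c \<in> f ` {mdeg n h..m}"
    then obtain e where e: "e \<in> {mdeg n h..m}" "c = f e" by auto
    then show "c \<in> {c\<in>D. mdeg n c \<le> t}" using fp[OF e(1)] assms(4) by (auto simp: m_def)
  qed
  ultimately have "card {mdeg n h..m} \<le> card {c\<in>D. mdeg n c \<le> t}"
    using assms(3) by (intro card_inj_on_le) auto
  then show ?thesis by (simp add: m_def)
qed

lemma InvP_base: "InvP (Suc n) n"
  unfolding InvP_def
proof (intro allI impI)
  fix N assume std: "std (Suc n) n N"
  have z: "a = (\<lambda>_. 0)" if "a \<in> monk (Suc n) n" for a
    using that unfolding monk_def by (auto simp: fun_eq_iff)
  have zm: "(\<lambda>_. 0) \<in> monk (Suc n) n" by (simp add: monk_def)
  have md0: "mdeg n (\<lambda>_. 0) = 0" by (simp add: mdeg_def)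
  show "\<exists>as. sorted_wrt (\<ge>) as \<and> (\<forall>t. Htr as t \<le> cntle n N t) \<and>
      (\<forall>t. length as \<le> Suc t \<longrightarrow> cntle n N t = Htr as t) \<and>
      (\<forall>u\<in>monk (Suc n) n. u \<notin> N \<longrightarrow> (\<exists>v. mdvd v u \<and> v \<notin> N \<and> mdeg n v \<le> length as))"
  proof (cases "(\<lambda>_. 0) \<in> N")
    case True
    then have N: "N = {\<lambda>_. 0}" using std z unfolding std_def by blast
    have c: "cntle n N t = 1" for t
    proof -
      have "{u \<in> N. mdeg n u \<le> t} = {\<lambda>_. 0}" using md0 N by auto
      then show ?thesis unfolding cntle_def by simp
    qed
    have h: "Htr [0] t = 1" for t unfolding Htr_def by simp
    show ?thesis using c h z N by (intro exI[of _ "[0]"]) auto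
  next
    case False
    then have N: "N = {}" using std z unfolding std_def by blast
    have c: "cntle n N t = 0" for t unfolding cntle_def N by simp
    have h: "Htr [] t = 0" for t unfolding Htr_def by simp
    show ?thesis using c h z N md0 by (intro exI[of _ "[]"]) (auto intro: exI[of _ "\<lambda>_. 0"])
  qed
qed



lemma collapse:
  assumes std: "std k n N" and kn: "k \<le> n"
  shows "u \<in> N \<Longrightarrow> mdvd h u \<Longrightarrow> h k = 0 \<Longrightarrow> h(k := mdeg n u - mdeg n h) \<in> N"
proof (induction "\<Sum>i\<in>{..n}-{k}. u i - h i" arbitrary: u rule: less_induct)
  case less
  have uN: "u \<in> monk k n" using less.prems std unfolding std_def by blast
  show ?case
  proof (cases "\<forall>i\<in>{..n}-{k}. u i = h i")
    case True
    have u: "u = h(k := u k)"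
    proof
      fix i show "u i = (h(k := u k)) i"
      proof (cases "i \<le> n")
        case True then show ?thesis using \<open>\<forall>i\<in>{..n}-{k}. u i = h i\<close> by auto
      next
        case False
        then have "u i = 0" using uN unfolding monk_def by auto
        moreover have "h i \<le> u i" using less.prems unfolding mdvd_def by auto
        ultimately show ?thesis using False kn by auto
      qed
    qed
    have "mdeg n (h(k := u k)) + h k = mdeg n h + u k" by (rule mdeg_upd[OF kn])
    then have eq: "mdeg n u = mdeg n h + u k" using less.prems(3) by (simp only: u[symmetric])
    have "h(k := mdeg n u - mdeg n h) = u" by (simp add: eq, rule sym, rule u)
    then show ?thesis using less.prems(1) by simp
  next
    case False
    then obtain i where i: "i \<in> {..n}-{k}" "u i \<noteq> h i" by auto
    have hu: "h i \<le> u i" using less.prems unfolding mdvd_def by auto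
    with i have lt: "h i < u i" by simp
    have "k \<le> i"
    proof (rule ccontr)
      assume "\<not> k \<le> i" then have "u i = 0" using uN unfolding monk_def by auto
      with lt show False by simp
    qed
    with i have ki: "k < i" by auto
    define u' where "u' = mmove u i k"
    have u'N: "u' \<in> N" using std less.prems lt ki unfolding std_def u'_def by auto
    have "mdvd h u'" using less.prems lt ki unfolding mdvd_def u'_def mmove_def by auto
    moreover have "mdeg n u' = mdeg n u" unfolding u'_def
      using lt i kn by (intro mdeg_mmove) auto
    moreover have "(\<Sum>i\<in>{..n}-{k}. u' i - h i) < (\<Sum>i\<in>{..n}-{k}. u i - h i)"
    proof (rule sum_strict_mono_ex1)
      show "\<forall>x\<in>{..n}-{k}. u' x - h x \<le> u x - h x" unfolding u'_def mmove_def by auto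
      show "\<exists>a\<in>{..n}-{k}. u' a - h a < u a - h a"
        using i lt unfolding u'_def mmove_def by (intro bexI[of _ i]) auto
    qed simp
    ultimately show ?thesis using less.hyps[of u'] u'N less.prems by simp
  qed
qed

lemma mdvd_upd0: "mdvd h u \<Longrightarrow> h k = 0 \<Longrightarrow> mdvd h (u(k:=0))"
  unfolding mdvd_def by auto

lemma mdvd_upd0': assumes a: "mdvd h (u(k:=0))" shows "mdvd h u \<and> h k = 0"
proof -
  have hk: "h k = 0" using a[unfolded mdvd_def, rule_format, of k] by simp
  have "h i \<le> u i" for i using a[unfolded mdvd_def, rule_format, of i] hk by (cases "i = k") auto
  then show ?thesis using hk unfolding mdvd_def by auto
qed

lemma InvP_step:
  assumes kn: "k \<le> n" and IH: "InvP (Suc k) n"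
  shows "InvP k n"
  unfolding InvP_def
proof (intro allI impI)
  fix N assume std: "std k n N"
  have Nsub: "N \<subseteq> monk k n" and Ndiv: "\<And>u v. u \<in> N \<Longrightarrow> mdvd v u \<Longrightarrow> v \<in> N"
    and Nbor: "\<And>u i j. u \<in> N \<Longrightarrow> k \<le> i \<Longrightarrow> i < j \<Longrightarrow> 0 < u j \<Longrightarrow> mmove u j i \<in> N"
    using std unfolding std_def by blast+
  define N2 where "N2 = {u \<in> N. \<forall>j. u(k := u k + j) \<in> N}"
  define M where "M = {u \<in> N2. u k = 0}"
  define D where "D = N - N2"
  have N2N: "N2 \<subseteq> N" unfolding N2_def by auto
  have Mdiv: "v \<in> M" if "u \<in> M" "mdvd v u" for u v
  proof -
    have vN: "v \<in> N" using that Ndiv unfolding M_def N2_def by blast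
    have "v k \<le> u k" using that(2) by (simp add: mdvd_def)
    moreover have "u k = 0" using that(1) unfolding M_def by simp
    ultimately have vk: "v k = 0" by simp
    have "v(k := v k + j) \<in> N" for j
    proof -
      have "u(k := u k + j) \<in> N" using that unfolding M_def N2_def by blast
      moreover have "mdvd (v(k := v k + j)) (u(k := u k + j))" using that(2) unfolding mdvd_def by auto
      ultimately show ?thesis using Ndiv by blast
    qed
    then show ?thesis using vN vk unfolding M_def N2_def by blast
  qed
  have stdM: "std (Suc k) n M"
    unfolding std_def
  proof (intro conjI ballI allI impI)
    show "M \<subseteq> monk (Suc k) n"
    proof
      fix u assume "u \<in> M"
      then have "u \<in> monk k n" "u k = 0" using Nsub unfolding M_def N2_def by auto
      then show "u \<in> monk (Suc k) n" unfolding monk_def using less_SucE by auto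
    qed
  next
    fix u v assume "u \<in> M" "mdvd v u" then show "v \<in> M" by (rule Mdiv)
  next
    fix u i j assume u: "u \<in> M" and ij: "Suc k \<le> i \<and> i < j \<and> 0 < u j"
    have w: "mmove u j i \<in> N" using u ij Nbor unfolding M_def N2_def by auto
    have wk: "(mmove u j i) k = 0" using u ij unfolding M_def mmove_def by auto
    have "(mmove u j i)(k := (mmove u j i) k + j') \<in> N" for j'
    proof -
      have "u(k := u k + j') \<in> N" using u unfolding M_def N2_def by blast
      then have "mmove (u(k := u k + j')) j i \<in> N" using ij by (intro Nbor) auto
      moreover have "mmove (u(k := u k + j')) j i = (mmove u j i)(k := (mmove u j i) k + j')"
        using ij unfolding mmove_def by (auto simp: fun_eq_iff)
      ultimately show ?thesis by simp
    qed
    then show "mmove u j i \<in> M" using w wk unfolding M_def N2_def by blast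
  qed
  have F1: "u \<in> N2 \<longleftrightarrow> u(k:=0) \<in> M" if "u \<in> monk k n" for u
  proof
    assume u: "u \<in> N2"
    have "(u(k:=0))(k := 0 + j) \<in> N" for j
    proof (cases "j \<le> u k")
      case True
      have "mdvd ((u(k:=0))(k := 0 + j)) u" using True unfolding mdvd_def by auto
      then show ?thesis using u N2N Ndiv by blast
    next
      case False
      have "u(k := u k + (j - u k)) \<in> N" using u unfolding N2_def by blast
      then show ?thesis using False by simp
    qed
    then show "u(k:=0) \<in> M" unfolding M_def N2_def by simp
  next
    assume "u(k:=0) \<in> M"
    then have h: "(u(k:=0))(k := j) \<in> N" for j unfolding M_def N2_def by simp
    have "u \<in> N" using h[of "u k"] by simp
    moreover have "u(k := u k + j) \<in> N" for j using h[of "u k + j"] by simp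
    ultimately show "u \<in> N2" unfolding N2_def by blast
  qed
  obtain bs where bs_sorted: "sorted_wrt (\<ge>) bs" and bsa: "\<And>t. Htr bs t \<le> cntle n M t"
    and bsb: "\<And>t. length bs \<le> Suc t \<Longrightarrow> cntle n M t = Htr bs t"
    and bsc: "\<And>u. u \<in> monk (Suc k) n \<Longrightarrow> u \<notin> M \<Longrightarrow> \<exists>v. mdvd v u \<and> v \<notin> M \<and> mdeg n v \<le> length bs"
    using IH stdM unfolding InvP_def by blast
  define r' where "r' = length bs"
  have upd_monk: "u(k:=0) \<in> monk (Suc k) n" if "u \<in> monk k n" for u
    using that unfolding monk_def using less_SucE by auto
  have chain: "\<exists>h. mdvd h u \<and> h \<notin> M \<and> h k = 0 \<and> mdeg n h \<le> r' \<and> (\<forall>c. mdvd h c \<and> mdvd c u \<longrightarrow> c \<in> D)"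
    if uD: "u \<in> D" for u
  proof -
    have uN: "u \<in> N" "u \<notin> N2" using uD unfolding D_def by auto
    have um: "u \<in> monk k n" using uN Nsub by auto
    have "u(k:=0) \<notin> M" using F1[OF um] uN by simp
    then obtain h where h: "mdvd h (u(k:=0))" "h \<notin> M" "mdeg n h \<le> r'"
      using bsc[OF upd_monk[OF um]] unfolding r'_def by blast
    have hu: "mdvd h u" "h k = 0" using mdvd_upd0'[OF h(1)] by auto
    have "c \<in> D" if c: "mdvd h c" "mdvd c u" for c
    proof -
      have cN: "c \<in> N" using c uN Ndiv by blast
      have cm: "c \<in> monk k n" using cN Nsub by auto
      have "c \<notin> N2"
      proof
        assume "c \<in> N2"
        then have "c(k:=0) \<in> M" using F1[OF cm] by simp
        moreover have "mdvd h (c(k:=0))" using mdvd_upd0[OF c(1) hu(2)] .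
        ultimately have "h \<in> M" using Mdiv by blast
        then show False using h by simp
      qed
      then show ?thesis using cN unfolding D_def by simp
    qed
    then show ?thesis using h hu by blast
  qed
  show "\<exists>as. sorted_wrt (\<ge>) as \<and> (\<forall>t. Htr as t \<le> cntle n N t) \<and>
      (\<forall>t. length as \<le> Suc t \<longrightarrow> cntle n N t = Htr as t) \<and>
      (\<forall>u\<in>monk k n. u \<notin> N \<longrightarrow> (\<exists>v. mdvd v u \<and> v \<notin> N \<and> mdeg n v \<le> length as))"
  proof -
  have Mm: "M \<subseteq> monk (Suc k) n" using stdM unfolding std_def by blast
  have Dsub: "D \<subseteq> N" unfolding D_def by auto
  have finD: "finite D"
  proof -
    define H where "H = {h \<in> mons n. mdeg n h \<le> r'}"
    define B where "B h = (LEAST j. h(k := j) \<notin> N)" for h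
    define Bm where "Bm = Max (insert 0 (B ` H))"
    have finH: "finite H" unfolding H_def by (rule finite_deg)
    have "D \<subseteq> {u \<in> mons n. mdeg n u \<le> r' + Bm}"
    proof
      fix u assume uD: "u \<in> D"
      then have uN: "u \<in> N" unfolding D_def by auto
      have um: "u \<in> mons n" using uN Nsub monk_mons by blast
      obtain h where h: "mdvd h u" "h \<notin> M" "h k = 0" "mdeg n h \<le> r'"
        using chain[OF uD] by blast
      have hN: "h \<in> N" using Ndiv uN h by blast
      have "h \<notin> N2" using h(2,3) unfolding M_def by auto
      then obtain j where "h(k := h k + j) \<notin> N" using hN unfolding N2_def by blast
      then have ex: "\<exists>j. h(k := j) \<notin> N" by blast
      have hB: "h(k := B h) \<notin> N" unfolding B_def using LeastI_ex[OF ex] .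
      have col: "h(k := mdeg n u - mdeg n h) \<in> N" using collapse[OF std kn uN h(1) h(3)] .
      have "mdeg n u - mdeg n h < B h"
      proof (rule ccontr)
        assume "\<not> mdeg n u - mdeg n h < B h"
        then have "mdvd (h(k := B h)) (h(k := mdeg n u - mdeg n h))" unfolding mdvd_def by auto
        then show False using Ndiv col hB by blast
      qed
      moreover have "h \<in> H" unfolding H_def using h mons_down[OF h(1) um] by auto
      then have "B h \<le> Bm" unfolding Bm_def using finH by (intro Max_ge) auto
      ultimately show "u \<in> {u \<in> mons n. mdeg n u \<le> r' + Bm}" using um h(4) by auto
    qed
    then show ?thesis by (rule finite_subset) (rule finite_deg)
  qed
  define Dc where "Dc = card D"
  define Dle where "Dle t = card {u\<in>D. mdeg n u \<le> t}" for t
  have F3: "cntle n N t = cntle n N2 t + Dle t" for t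
  proof -
    have "{u\<in>N. mdeg n u \<le> t} = {u\<in>N2. mdeg n u \<le> t} \<union> {u\<in>D. mdeg n u \<le> t}"
      using N2N unfolding D_def by auto
    moreover have "finite {u\<in>N2. mdeg n u \<le> t}" "finite {u\<in>D. mdeg n u \<le> t}"
      using finite_cnt[of N2 k n t] finite_cnt[of D k n t] N2N Nsub Dsub by auto
    moreover have "{u\<in>N2. mdeg n u \<le> t} \<inter> {u\<in>D. mdeg n u \<le> t} = {}" unfolding D_def by auto
    ultimately show ?thesis unfolding cntle_def Dle_def
      by (metis (no_types, lifting) card_Un_disjoint)
  qed
  have F4a: "card {u\<in>N2. mdeg n u = s} = cntle n M s" for s
  proof -
    have "bij_betw (\<lambda>u. u(k:=0)) {u\<in>N2. mdeg n u = s} {v\<in>M. mdeg n v \<le> s}"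
    proof (rule bij_betw_byWitness[where f' = "\<lambda>v. v(k := s - mdeg n v)"])
      show "\<forall>u\<in>{u\<in>N2. mdeg n u = s}. (u(k:=0))(k := s - mdeg n (u(k:=0))) = u"
      proof
        fix u assume u: "u \<in> {u\<in>N2. mdeg n u = s}"
        have "mdeg n (u(k:=0)) + u k = mdeg n u + 0" by (rule mdeg_upd[OF kn])
        then have "s - mdeg n (u(k:=0)) = u k" using u by auto
        then show "(u(k:=0))(k := s - mdeg n (u(k:=0))) = u" by simp
      qed
      show "\<forall>v\<in>{v\<in>M. mdeg n v \<le> s}. (v(k := s - mdeg n v))(k:=0) = v"
        unfolding M_def by auto
      show "(\<lambda>u. u(k:=0)) ` {u\<in>N2. mdeg n u = s} \<subseteq> {v\<in>M. mdeg n v \<le> s}"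
      proof clarify
        fix u assume u: "u \<in> N2"
        have "u \<in> monk k n" using u N2N Nsub by auto
        then have "u(k:=0) \<in> M" using F1 u by blast
        moreover have "mdeg n (u(k:=0)) \<le> mdeg n u" by (rule mdeg_mono) (simp add: mdvd_def)
        ultimately show "u(k:=0) \<in> M \<and> mdeg n (u(k:=0)) \<le> mdeg n u" by simp
      qed
      show "(\<lambda>v. v(k := s - mdeg n v)) ` {v\<in>M. mdeg n v \<le> s} \<subseteq> {u\<in>N2. mdeg n u = s}"
      proof clarify
        fix v assume v: "v \<in> M" "mdeg n v \<le> s"
        have vk: "v k = 0" using v unfolding M_def by simp
        have vm: "v \<in> monk (Suc k) n" using v Mm by auto
        have um: "v(k := s - mdeg n v) \<in> monk k n" using vm kn unfolding monk_def by auto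
        have "(v(k := s - mdeg n v))(k := 0) = v" using vk by auto
        then have "v(k := s - mdeg n v) \<in> N2" using F1[OF um] v by simp
        moreover have "mdeg n (v(k := s - mdeg n v)) + v k = mdeg n v + (s - mdeg n v)"
          by (rule mdeg_upd[OF kn])
        ultimately show "v(k := s - mdeg n v) \<in> N2 \<and> mdeg n (v(k := s - mdeg n v)) = s"
          using vk v by simp
      qed
    qed
    then show ?thesis unfolding cntle_def by (rule bij_betw_same_card)
  qed
  have F4: "cntle n N2 t = (\<Sum>s\<le>t. cntle n M s)" for t
  proof (induction t)
    case 0
    have "{u\<in>N2. mdeg n u \<le> 0} = {u\<in>N2. mdeg n u = 0}" by auto
    then show ?case using F4a[of 0] unfolding cntle_def by simp
  next
    case (Suc t)
    have "{u\<in>N2. mdeg n u \<le> Suc t} = {u\<in>N2. mdeg n u \<le> t} \<union> {u\<in>N2. mdeg n u = Suc t}" by auto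
    moreover have N2m: "N2 \<subseteq> monk k n" using N2N Nsub by auto
    then have "finite {u\<in>N2. mdeg n u \<le> t}" using finite_cnt[OF N2m] by blast
    moreover have "finite {u\<in>N2. mdeg n u = Suc t}"
      by (rule finite_subset[OF _ finite_cnt[OF N2m, of "Suc t"]]) auto
    ultimately have "cntle n N2 (Suc t) = cntle n N2 t + card {u\<in>N2. mdeg n u = Suc t}"
      unfolding cntle_def by (subst card_Un_disjoint[symmetric]) auto
    then show ?case using Suc F4a[of "Suc t"] by simp
  qed
  define E where "E t = (\<Sum>s\<le>t. cntle n M s - Htr bs s)" for t
  have Esum: "(\<Sum>s\<le>t. cntle n M s) = Htr (map Suc bs) t + E t" for t
  proof -
    have "E t = (\<Sum>s\<le>t. cntle n M s) - (\<Sum>s\<le>t. Htr bs s)"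
      unfolding E_def by (rule sum_subtractf_nat) (use bsa in auto)
    moreover have "(\<Sum>s\<le>t. Htr bs s) \<le> (\<Sum>s\<le>t. cntle n M s)" by (rule sum_mono) (use bsa in auto)
    ultimately show ?thesis using Htr_sum[of bs t] by simp
  qed
  have Eshift: "E (t + j) = E t" if "r' \<le> Suc t" for t j
  proof (induction j)
    case 0 then show ?case by simp
  next
    case (Suc j)
    have "E (t + Suc j) = E (t + j) + (cntle n M (Suc (t + j)) - Htr bs (Suc (t + j)))"
      unfolding E_def by simp
    moreover have "cntle n M (Suc (t + j)) = Htr bs (Suc (t + j))"
      using bsb that unfolding r'_def by simp
    ultimately show ?case using Suc by simp
  qed
  define m2 where "m2 = E r'"
  have Econst: "E t = m2" if "r' \<le> Suc t" for t
  proof -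
    have "E t = E ((r' - 1) + (t - (r' - 1)))" using that by simp
    also have "\<dots> = E (r' - 1)" by (rule Eshift) simp
    also have "\<dots> = E ((r' - 1) + (r' - (r' - 1)))" by (rule Eshift[symmetric]) simp
    also have "\<dots> = m2" unfolding m2_def by simp
    finally show ?thesis .
  qed
  have D1: "min Dc (Suc t - r') \<le> Dle t" for t
  proof (cases "\<forall>u\<in>D. mdeg n u \<le> t")
    case True
    then have "{u\<in>D. mdeg n u \<le> t} = D" by auto
    then show ?thesis unfolding Dle_def Dc_def by simp
  next
    case False
    then obtain u where uD: "u \<in> D" and ut: "t < mdeg n u" by auto
    obtain h where h: "mdvd h u" "h \<notin> M" "h k = 0" "mdeg n h \<le> r'" "\<forall>c. mdvd h c \<and> mdvd c u \<longrightarrow> c \<in> D"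
      using chain[OF uD] by blast
    have um: "u \<in> mons n" using uD Dsub Nsub monk_mons by blast
    have "Suc (min t (mdeg n u)) - mdeg n h \<le> Dle t"
      unfolding Dle_def by (rule chain_card[OF h(1) um finD]) (use h(5) in blast)
    then show ?thesis using ut h(4) by simp
  qed
  have D2: "Suc (mdeg n u) \<le> r' + Dc" if uD: "u \<in> D" for u
  proof -
    obtain h where h: "mdvd h u" "h \<notin> M" "h k = 0" "mdeg n h \<le> r'" "\<forall>c. mdvd h c \<and> mdvd c u \<longrightarrow> c \<in> D"
      using chain[OF uD] by blast
    have um: "u \<in> mons n" using uD Dsub Nsub monk_mons by blast
    have "Suc (min (mdeg n u) (mdeg n u)) - mdeg n h \<le> card {c\<in>D. mdeg n c \<le> mdeg n u}"
      by (rule chain_card[OF h(1) um finD]) (use h(5) in blast)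
    moreover have "card {c\<in>D. mdeg n c \<le> mdeg n u} \<le> Dc" unfolding Dc_def
      using finD by (intro card_mono) auto
    ultimately show ?thesis using h(4) by simp
  qed
  define z where "z = m2 + Dc"
  define as where "as = map Suc bs @ replicate z 0"
  have len: "length as = r' + z" unfolding as_def r'_def by simp
  have Hta: "Htr as t = Htr (map Suc bs) t + min z (Suc t - r')" for t
    unfolding as_def r'_def by (simp add: Htr_zeros)
  have cN: "cntle n N t = Htr (map Suc bs) t + E t + Dle t" for t
    using F3 F4 Esum by simp
  show ?thesis
  proof (intro exI[of _ as] conjI allI impI ballI)
    have "sorted_wrt (\<ge>) (replicate z (0::nat))" by (induction z) auto
    then show "sorted_wrt (\<ge>) as" unfolding as_def using bs_sorted
      by (auto simp: sorted_wrt_append sorted_wrt_map)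
  next
    fix t
    show "Htr as t \<le> cntle n N t"
    proof (cases "r' \<le> t")
      case False then show ?thesis using Hta cN by simp
    next
      case True
      then have "E t = m2" using Econst by simp
      then show ?thesis using Hta cN D1[of t] unfolding z_def by simp
    qed
  next
    fix t assume lt: "length as \<le> Suc t"
    then have "E t = m2" using Econst len by simp
    moreover have "Dle t = Dc"
    proof -
      have "{u\<in>D. mdeg n u \<le> t} = D" using D2 lt len unfolding z_def by fastforce
      then show ?thesis unfolding Dle_def Dc_def by simp
    qed
    ultimately show "cntle n N t = Htr as t" using Hta cN lt len unfolding z_def by simp
  next
    fix u assume um: "u \<in> monk k n" and uN: "u \<notin> N"
    have "u \<notin> N2" using uN N2N by auto
    then have "u(k:=0) \<notin> M" using F1[OF um] by simp
    then obtain h where h: "mdvd h (u(k:=0))" "h \<notin> M" "mdeg n h \<le> r'"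
      using bsc[OF upd_monk[OF um]] unfolding r'_def by blast
    have hu: "mdvd h u" "h k = 0" using mdvd_upd0'[OF h(1)] by auto
    have umons: "u \<in> mons n" using um monk_mons by blast
    show "\<exists>v. mdvd v u \<and> v \<notin> N \<and> mdeg n v \<le> length as"
    proof (cases "h \<in> N")
      case False then show ?thesis using hu h len by (intro exI[of _ h]) auto
    next
      case True
      define S where "S = {c. mdvd h c \<and> mdvd c u \<and> c \<notin> N}"
      have uS: "u \<in> S" unfolding S_def using hu uN by simp
      define e0 where "e0 = (LEAST e. \<exists>c\<in>S. mdeg n c = e)"
      have "\<exists>c\<in>S. mdeg n c = e0" unfolding e0_def by (rule LeastI_ex) (use uS in blast)
      then obtain v where vS: "v \<in> S" and ve: "mdeg n v = e0" by blast
      have vmin: "e0 \<le> mdeg n c" if "c \<in> S" for c unfolding e0_def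
        by (rule Least_le) (use that in blast)
      have vm: "v \<in> mons n" using vS umons mons_down unfolding S_def by blast
      have hv: "mdvd h v" "mdvd v u" "v \<notin> N" using vS unfolding S_def by auto
      have "mdeg n v \<le> r' + Dc"
      proof (cases "mdeg n v = 0")
        case True then show ?thesis by simp
      next
        case False
        have "Suc (min (mdeg n v - 1) (mdeg n v)) - mdeg n h \<le> card {c\<in>D. mdeg n c \<le> mdeg n v - 1}"
        proof (rule chain_card[OF hv(1) vm finD])
          fix c assume c: "mdvd h c" "mdvd c v" "mdeg n c \<le> mdeg n v - 1"
          have cu: "mdvd c u" using c(2) hv(2) by (rule mdvd_trans)
          have cN: "c \<in> N"
          proof (rule ccontr)
            assume "c \<notin> N"
            then have "c \<in> S" unfolding S_def using c cu by simp
            then have "e0 \<le> mdeg n c" by (rule vmin)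
            then show False using c(3) ve False by simp
          qed
          have cm: "c \<in> monk k n" using cN Nsub by auto
          have "c \<notin> N2"
          proof
            assume "c \<in> N2"
            then have "c(k:=0) \<in> M" using F1[OF cm] by simp
            moreover have "mdvd h (c(k:=0))" using mdvd_upd0[OF c(1) hu(2)] .
            ultimately have "h \<in> M" using Mdiv by blast
            then show False using h by simp
          qed
          then show "c \<in> D" using cN unfolding D_def by simp
        qed
        moreover have "card {c\<in>D. mdeg n c \<le> mdeg n v - 1} \<le> Dc" unfolding Dc_def
          using finD by (intro card_mono) auto
        ultimately show ?thesis using h(3) False by simp
      qed
      then show ?thesis using hv len unfolding z_def by (intro exI[of _ v]) auto
    qed
  qed
  qed
qed

lemma InvP_all: "k \<le> Suc n \<Longrightarrow> InvP k n"
proof (induction k rule: inc_induct)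
  case base then show ?case by (rule InvP_base)
next
  case (step m) then show ?case using InvP_step by simp
qed



lemma gsum_nat: assumes "length as \<le> t"
  shows "(\<Sum>i<length as. (real t + real (as!i) - real i) gchoose (as!i)) = real (Hc 0 as t)"
  unfolding Hc_def of_nat_sum
proof (intro sum.cong refl)
  fix i assume "i \<in> {..<length as}"
  then have "i \<le> t" using assms by auto
  then have e: "real t + real (as!i) - real i = real (t + 0 + as!i - i)" by (simp add: of_nat_diff)
  show "(real t + real (as!i) - real i) gchoose (as!i) = real ((t + 0 + as!i - i) choose (as!i))"
    by (subst e) (rule binomial_gbinomial[symmetric])
qed

lemma gsum_poly: "\<exists>Q. \<forall>x::real. poly Q x = (\<Sum>i<length as. (x + real (as!i) - real i) gchoose (as!i))"
proof -
  define Q where "Q = (\<Sum>i<length as. smult (1 / fact (as!i))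
      (\<Prod>j=0..<as!i. [:real (as!i) - real i - real j, 1:]))"
  have "poly Q x = (\<Sum>i<length as. (x + real (as!i) - real i) gchoose (as!i))" for x
    unfolding Q_def poly_sum
  proof (intro sum.cong refl)
    fix i
    show "poly (smult (1 / fact (as!i)) (\<Prod>j=0..<as!i. [:real (as!i) - real i - real j, 1:])) x =
        (x + real (as!i) - real i) gchoose (as!i)"
      by (simp add: poly_prod gbinomial_prod_rev algebra_simps)
  qed
  then show ?thesis by blast
qed

lemma decomp_of_eventual:
  assumes s: "sorted_wrt (\<ge>) as" and ev: "\<forall>t\<ge>T. poly p (real t) = real (Htr as t)"
  shows "gotzmann_decomp p as"
proof -
  obtain Q where Q: "\<And>x. poly Q x = (\<Sum>i<length as. (x + real (as!i) - real i) gchoose (as!i))"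
    using gsum_poly by blast
  define T' where "T' = max T (length as)"
  have eq: "poly (p - Q) (real t) = 0" if "T' \<le> t" for t
  proof -
    have "poly p (real t) = real (Htr as t)" using ev that unfolding T'_def by auto
    also have "Htr as t = Hc 0 as t" using that unfolding T'_def by (intro Htr_Hc) auto
    also have "real (Hc 0 as t) = poly Q (real t)" unfolding Q using that unfolding T'_def
      by (intro gsum_nat[symmetric]) auto
    finally show ?thesis by simp
  qed
  have "p - Q = 0"
  proof (rule ccontr)
    assume "p - Q \<noteq> 0"
    then have fin: "finite {x. poly (p - Q) x = 0}" by (rule poly_roots_finite)
    have "real ` {T'..} \<subseteq> {x. poly (p - Q) x = 0}" using eq by auto
    moreover have "infinite (real ` {T'..})"
      using infinite_Ici[of T'] by (simp add: finite_image_iff inj_on_def)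
    ultimately show False using fin finite_subset by blast
  qed
  then have "p = Q" by simp
  then show ?thesis unfolding gotzmann_decomp_def using s Q by simp
qed

lemma gotz_unique:
  assumes d: "gotzmann_decomp p as" shows "gotzmann_number p = length as"
  unfolding gotzmann_number_def
proof (rule the_equality)
  show "\<exists>as'. gotzmann_decomp p as' \<and> length as' = length as" using d by blast
next
  fix r assume "\<exists>bs. gotzmann_decomp p bs \<and> length bs = r"
  then obtain bs where b: "gotzmann_decomp p bs" "length bs = r" by blast
  have "\<forall>t\<ge>length as + length bs. Hc 0 as t = Hc 0 bs t"
  proof (intro allI impI)
    fix t assume t: "length as + length bs \<le> t"
    have "real (Hc 0 as t) = poly p (real t)"
      using d gsum_nat[of as t] t unfolding gotzmann_decomp_def by simp
    also have "\<dots> = real (Hc 0 bs t)"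
      using b(1) gsum_nat[of bs t] t unfolding gotzmann_decomp_def b(2) by simp
    finally show "Hc 0 as t = Hc 0 bs t" by simp
  qed
  moreover have sa: "sorted_wrt (\<ge>) as" using d unfolding gotzmann_decomp_def by blast
  moreover have sb: "sorted_wrt (\<ge>) bs" using b(1) unfolding gotzmann_decomp_def by blast
  ultimately have "as = bs" using Hc_unique by blast
  then show "r = length as" using b by simp
qed



lemma ideal_up: assumes "mon_ideal n J" "a \<in> J" "b \<in> mons n" "mdvd a b" shows "b \<in> J"
proof -
  have M: "(\<lambda>i. b i - a i) \<in> mons n" using assms(3) unfolding mons_def by auto
  have J: "(\<lambda>i. a i + (b i - a i)) \<in> J"
    using bspec[OF bspec[OF conjunct2[OF assms(1)[unfolded mon_ideal_def]] assms(2)] M] by simp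
  have eq: "(\<lambda>i. a i + (b i - a i)) = b" using assms(4) unfolding mdvd_def by auto
  show ?thesis by (subst eq[symmetric]) (rule J)
qed

lemma bf_mi: "borel_fixed n J \<Longrightarrow> mon_ideal n J"
  unfolding borel_fixed_def by (rule conjunct1)

lemma mi_mons: "mon_ideal n J \<Longrightarrow> a \<in> J \<Longrightarrow> a \<in> mons n"
  unfolding mon_ideal_def by (erule conjE) (erule subsetD)

lemma bf_move: assumes "borel_fixed n J" "a \<in> J" "0 < a i" "i < j" "j \<le> n"
  shows "mmove a i j \<in> J"
proof -
  have "\<forall>a\<in>J. \<forall>i j. 0 < a i \<and> i < j \<and> j \<le> n \<longrightarrow> mmove a i j \<in> J"
    using assms(1) unfolding borel_fixed_def by (rule conjunct2)
  then show ?thesis using assms(2-5) by simp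
qed

lemma sat_step:
  assumes bf: "borel_fixed n J" and sat: "msat n J = J" and b: "b \<in> mons n" and c: "b(0 := b 0 + 1) \<in> J"
  shows "b \<in> J"
proof -
  have mi: "mon_ideal n J" using bf by (rule bf_mi)
  have "(\<lambda>i. b i + m i) \<in> J" if m: "m \<in> mons_deg n 1" for m
  proof -
    have mm: "m \<in> mons n" "mdeg n m = 1" using m unfolding mons_deg_def by auto
    have "\<exists>i\<le>n. 0 < m i"
    proof (rule ccontr)
      assume "\<not> (\<exists>i\<le>n. 0 < m i)"
      then have "mdeg n m = 0" unfolding mdeg_def by auto
      then show False using mm by simp
    qed
    then obtain i where i: "i \<le> n" "0 < m i" by blast
    have bm: "(\<lambda>i. b i + m i) \<in> mons n" using b mm unfolding mons_def by auto
    show ?thesis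
    proof (cases "i = 0")
      case True
      have "mdvd (b(0 := b 0 + 1)) (\<lambda>i. b i + m i)" using True i unfolding mdvd_def by auto
      then show ?thesis using ideal_up[OF mi c bm] by blast
    next
      case False
      have pos: "0 < (b(0 := b 0 + 1)) 0" by simp
      have "0 < i" using False by simp
      then have "mmove (b(0 := b 0 + 1)) 0 i \<in> J" using i by (intro bf_move[OF bf c pos])
      moreover have "mdvd (mmove (b(0 := b 0 + 1)) 0 i) (\<lambda>i. b i + m i)"
        using False i unfolding mdvd_def mmove_def by auto
      ultimately show ?thesis using ideal_up[OF mi _ bm] by blast
    qed
  qed
  then have "b \<in> msat n J" using b unfolding msat_def by blast
  then show ?thesis using sat by simp
qed

lemma sat_full:
  assumes bf: "borel_fixed n J" and sat: "msat n J = J"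
  shows "b \<in> mons n \<Longrightarrow> b(0 := b 0 + j) \<in> J \<Longrightarrow> b \<in> J"
proof (induction j)
  case 0 then show ?case by simp
next
  case (Suc j)
  have eq: "(b(0 := b 0 + j))(0 := (b(0 := b 0 + j)) 0 + 1) = b(0 := b 0 + Suc j)" by simp
  have "b(0 := b 0 + j) \<in> mons n" using Suc.prems(1) unfolding mons_def by auto
  moreover have "(b(0 := b 0 + j))(0 := (b(0 := b 0 + j)) 0 + 1) \<in> J" by (subst eq) (rule Suc.prems(2))
  ultimately have "b(0 := b 0 + j) \<in> J" by (rule sat_step[OF bf sat])
  then show ?case using Suc by blast
qed

lemma sat_drop0:
  assumes bf: "borel_fixed n J" and sat: "msat n J = J" and a: "a \<in> J"
  shows "a(0:=0) \<in> J"
proof -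
  have am: "a \<in> mons n" using mi_mons[OF bf_mi[OF bf] a] .
  have "a(0:=0) \<in> mons n" using am unfolding mons_def by auto
  moreover have "(a(0:=0))(0 := (a(0:=0)) 0 + a 0) \<in> J" using a by simp
  ultimately show ?thesis by (rule sat_full[OF bf sat])
qed



lemma regularity:
  assumes bf: "borel_fixed n J" and sat: "msat n J = J" and hp: "has_hilb_poly n J p"
  shows "\<exists>as. gotzmann_decomp p as \<and> (\<forall>a\<in>J. \<exists>v. mdvd v a \<and> v \<in> J \<and> mdeg n v \<le> length as)"
proof -
  have mi: "mon_ideal n J" using bf by (rule bf_mi)
  define N0 where "N0 = {u \<in> monk 1 n. u \<notin> J}"
  have std: "std 1 n N0" unfolding std_def
  proof (intro conjI ballI allI impI)
    show "N0 \<subseteq> monk 1 n" unfolding N0_def by auto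
  next
    fix u v assume u: "u \<in> N0" and v: "mdvd v u"
    have "v \<in> monk 1 n" using u v monk_down unfolding N0_def by blast
    moreover have "v \<notin> J"
    proof
      assume "v \<in> J"
      moreover have "u \<in> mons n" using u monk_mons unfolding N0_def by blast
      ultimately have "u \<in> J" using ideal_up[OF mi _ _ v] by blast
      then show False using u unfolding N0_def by simp
    qed
    ultimately show "v \<in> N0" unfolding N0_def by simp
  next
    fix u i j assume u: "u \<in> N0" and ij: "1 \<le> i \<and> i < j \<and> 0 < u j"
    have um: "u \<in> monk 1 n" using u unfolding N0_def by simp
    have jn: "j \<le> n"
    proof (rule ccontr)
      assume "\<not> j \<le> n" then have "u j = 0" using um unfolding monk_def by auto
      then show False using ij by simp
    qed
    have "mmove u j i \<in> monk 1 n" using um ij jn unfolding monk_def mmove_def by auto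
    moreover have "mmove u j i \<notin> J"
    proof
      assume m: "mmove u j i \<in> J"
      have pos: "0 < (mmove u j i) i" using ij by (simp add: mmove_def)
      have "mmove (mmove u j i) i j \<in> J" by (rule bf_move[OF bf m pos]) (use ij jn in auto)
      moreover have "mmove (mmove u j i) i j = u" using ij unfolding mmove_def by (auto simp: fun_eq_iff)
      ultimately show False using u unfolding N0_def by simp
    qed
    ultimately show "mmove u j i \<in> N0" unfolding N0_def by simp
  qed
  obtain as where as: "sorted_wrt (\<ge>) as" "\<forall>t. length as \<le> Suc t \<longrightarrow> cntle n N0 t = Htr as t"
     "\<forall>u\<in>monk 1 n. u \<notin> N0 \<longrightarrow> (\<exists>v. mdvd v u \<and> v \<notin> N0 \<and> mdeg n v \<le> length as)"
    using InvP_all[of 1 n] std unfolding InvP_def by auto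
  have hc: "hilb_fun n J t = cntle n N0 t" for t
  proof -
    have "bij_betw (\<lambda>a. a(0:=0)) (mons_deg n t - J) {u\<in>N0. mdeg n u \<le> t}"
    proof (rule bij_betw_byWitness[where f' = "\<lambda>u. u(0 := t - mdeg n u)"])
      show "\<forall>a\<in>mons_deg n t - J. (a(0:=0))(0 := t - mdeg n (a(0:=0))) = a"
      proof
        fix a assume a: "a \<in> mons_deg n t - J"
        have "mdeg n (a(0:=0)) + a 0 = mdeg n a + 0" by (rule mdeg_upd) simp
        then have "t - mdeg n (a(0:=0)) = a 0" using a unfolding mons_deg_def by auto
        then show "(a(0:=0))(0 := t - mdeg n (a(0:=0))) = a" by simp
      qed
      show "\<forall>u\<in>{u\<in>N0. mdeg n u \<le> t}. (u(0 := t - mdeg n u))(0:=0) = u"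
        unfolding N0_def monk_def by auto
      show "(\<lambda>a. a(0:=0)) ` (mons_deg n t - J) \<subseteq> {u\<in>N0. mdeg n u \<le> t}"
      proof clarify
        fix a assume a: "a \<in> mons_deg n t" "a \<notin> J"
        have "a(0:=0) \<in> monk 1 n" using a unfolding mons_deg_def mons_def monk_def by auto
        moreover have "a(0:=0) \<notin> J"
        proof
          assume "a(0:=0) \<in> J"
          moreover have "a \<in> mons n" using a unfolding mons_deg_def by simp
          moreover have "mdvd (a(0:=0)) a" unfolding mdvd_def by simp
          ultimately have "a \<in> J" using ideal_up[OF mi] by blast
          then show False using a by simp
        qed
        moreover have "mdeg n (a(0:=0)) \<le> t" using mdeg_mono[of "a(0:=0)" a n] a
          unfolding mons_deg_def mdvd_def by auto
        ultimately show "a(0:=0) \<in> N0 \<and> mdeg n (a(0:=0)) \<le> t" unfolding N0_def by simp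
      qed
      show "(\<lambda>u. u(0 := t - mdeg n u)) ` {u\<in>N0. mdeg n u \<le> t} \<subseteq> mons_deg n t - J"
      proof
        fix x assume "x \<in> (\<lambda>u. u(0 := t - mdeg n u)) ` {u\<in>N0. mdeg n u \<le> t}"
        then obtain u where u: "u \<in> N0" "mdeg n u \<le> t" and x: "x = u(0 := t - mdeg n u)" by blast
        have u0: "u 0 = 0" using u unfolding N0_def monk_def by auto
        have "u(0 := t - mdeg n u) \<in> mons n" using u unfolding N0_def monk_def mons_def by auto
        moreover have "mdeg n (u(0 := t - mdeg n u)) + u 0 = mdeg n u + (t - mdeg n u)"
          by (rule mdeg_upd) simp
        moreover have "u(0 := t - mdeg n u) \<notin> J"
        proof
          assume "u(0 := t - mdeg n u) \<in> J"
          then have "(u(0 := t - mdeg n u))(0:=0) \<in> J" by (rule sat_drop0[OF bf sat])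
          then show False using u u0 unfolding N0_def by (simp add: fun_upd_idem)
        qed
        ultimately show "x \<in> mons_deg n t - J"
          using u u0 x unfolding mons_deg_def by simp
      qed
    qed
    then show ?thesis unfolding hilb_fun_def cntle_def by (rule bij_betw_same_card)
  qed
  obtain t0 where t0: "\<forall>t\<ge>t0. real (hilb_fun n J t) = poly p (real t)" using hp unfolding has_hilb_poly_def by blast
  have "\<forall>t\<ge>t0 + length as. poly p (real t) = real (Htr as t)"
  proof (intro allI impI)
    fix t assume t: "t0 + length as \<le> t"
    then have "real (hilb_fun n J t) = poly p (real t)" using t0 by simp
    moreover have "cntle n N0 t = Htr as t" using as(2) t by simp
    ultimately show "poly p (real t) = real (Htr as t)" using hc by simp
  qed
  then have gd: "gotzmann_decomp p as" by (rule decomp_of_eventual[OF as(1)])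
  have "\<exists>v. mdvd v a \<and> v \<in> J \<and> mdeg n v \<le> length as" if a: "a \<in> J" for a
  proof -
    have am: "a \<in> mons n" using mi_mons[OF mi a] .
    have a0: "a(0:=0) \<in> J" by (rule sat_drop0[OF bf sat a])
    have a0m: "a(0:=0) \<in> monk 1 n" using am unfolding mons_def monk_def by auto
    then obtain v where v: "mdvd v (a(0:=0))" "v \<notin> N0" "mdeg n v \<le> length as"
      using as(3) a0 unfolding N0_def by blast
    have "v \<in> monk 1 n" using v(1) a0m monk_down by blast
    then have "v \<in> J" using v(2) unfolding N0_def by simp
    moreover have "mdvd v a" using mdvd_upd0'[OF v(1)] by blast
    ultimately show ?thesis using v(3) by blast
  qed
  then show ?thesis using gd by blast
qed



lemma borel_le_mmove_aux:
  assumes s: "s \<in> mons n" "0 < s i"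
  shows "Suc i \<le> j \<Longrightarrow> j \<le> n \<Longrightarrow> borel_le n s (mmove s i j)"
proof (induction j)
  case 0 then show ?case by simp
next
  case (Suc j)
  show ?case
  proof (cases "j = i")
    case True
    have "borel_step n s (mmove s i (Suc i))" unfolding borel_step_def using s Suc.prems True by (intro conjI exI[of _ i]) auto
    then show ?thesis unfolding borel_le_def using True by simp
  next
    case False
    then have ij: "Suc i \<le> j" using Suc.prems by simp
    have 1: "borel_le n s (mmove s i j)" using Suc.IH ij Suc.prems by simp
    have "borel_step n (mmove s i j) (mmove (mmove s i j) j (Suc j))"
      unfolding borel_step_def using mmove_mons[OF s(1)] Suc.prems ij
      by (intro conjI exI[of _ j]) (auto simp: mmove_def)
    moreover have "mmove (mmove s i j) j (Suc j) = mmove s i (Suc j)"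
      using ij unfolding mmove_def by (auto simp: fun_eq_iff)
    ultimately have "borel_step n (mmove s i j) (mmove s i (Suc j))" by simp
    then show ?thesis using 1 unfolding borel_le_def by (rule rtranclp.rtrancl_into_rtrancl[rotated])
  qed
qed

lemma borel_le_mmove: "s \<in> mons n \<Longrightarrow> 0 < s i \<Longrightarrow> i < j \<Longrightarrow> j \<le> n \<Longrightarrow> borel_le n s (mmove s i j)"
  using borel_le_mmove_aux by simp

lemma mdeg_split: "mdeg n x = x 0 + (\<Sum>i\<in>{1..n}. x i)"
proof -
  have "{..n} = insert 0 {1..n}" by auto
  then show ?thesis unfolding mdeg_def by simp
qed

lemma to_borel:
  assumes b: "b \<in> mons n"
  shows "s \<in> mons n \<Longrightarrow> mdeg n s = mdeg n b \<Longrightarrow> \<forall>i>0. s i \<le> b i \<Longrightarrow> borel_le n s b"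
proof (induction "\<Sum>i\<in>{1..n}. b i - s i" arbitrary: s rule: less_induct)
  case less
  show ?case
  proof (cases "\<forall>i\<in>{1..n}. s i = b i")
    case True
    then have "(\<Sum>i\<in>{1..n}. s i) = (\<Sum>i\<in>{1..n}. b i)" by simp
    then have "s 0 = b 0" using less.prems(2) mdeg_split[of n s] mdeg_split[of n b] by simp
    have "s = b"
    proof
      fix i show "s i = b i"
      proof (cases "i \<le> n")
        case True then show ?thesis using \<open>s 0 = b 0\<close> \<open>\<forall>i\<in>{1..n}. s i = b i\<close> by (cases i) auto
      next
        case False then show ?thesis using b less.prems(1) unfolding mons_def by auto
      qed
    qed
    then show ?thesis unfolding borel_le_def by simp
  next
    case False
    then obtain i where i: "i \<in> {1..n}" "s i \<noteq> b i" by auto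
    then have lt: "s i < b i" using less.prems(3) by (simp add: le_neq_implies_less)
    have sum_lt: "(\<Sum>i\<in>{1..n}. s i) < (\<Sum>i\<in>{1..n}. b i)"
      using i lt less.prems(3) by (intro sum_strict_mono_ex1) auto
    have s0: "0 < s 0"
    proof (rule ccontr)
      assume "\<not> 0 < s 0"
      then show False using sum_lt less.prems(2) mdeg_split[of n s] mdeg_split[of n b] by simp
    qed
    define s' where "s' = mmove s 0 i"
    have 1: "borel_le n s s'" unfolding s'_def using less.prems(1) s0 i by (intro borel_le_mmove) auto
    have s'm: "s' \<in> mons n" unfolding s'_def using less.prems(1) i by (intro mmove_mons) auto
    have s'd: "mdeg n s' = mdeg n b" unfolding s'_def using less.prems(2) s0 i by (subst mdeg_mmove) auto
    have s'le: "\<forall>l>0. s' l \<le> b l" using less.prems(3) lt i unfolding s'_def mmove_def by auto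
    have "(\<Sum>i\<in>{1..n}. b i - s' i) < (\<Sum>i\<in>{1..n}. b i - s i)"
    proof (rule sum_strict_mono_ex1)
      show "\<forall>x\<in>{1..n}. b x - s' x \<le> b x - s x" unfolding s'_def mmove_def by auto
      show "\<exists>a\<in>{1..n}. b a - s' a < b a - s a"
        using i lt unfolding s'_def mmove_def by (intro bexI[of _ i]) auto
    qed simp
    then have "borel_le n s' b" using less.hyps s'm s'd s'le by blast
    then show ?thesis using 1 unfolding borel_le_def by (rule rtranclp_trans[rotated])
  qed
qed

lemma mons_deg0: "m \<in> mons_deg n 0 \<Longrightarrow> m = (\<lambda>_. 0)"
proof
  fix l assume m: "m \<in> mons_deg n 0"
  show "m l = 0"
  proof (cases "l \<le> n")
    case True
    have "(\<Sum>i\<le>n. m i) = 0" using m unfolding mons_deg_def mdeg_def by simp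
    then show ?thesis using True by simp
  next
    case False then show ?thesis using m unfolding mons_deg_def mons_def by simp
  qed
qed

theorem lemma3p1:
  fixes n r :: nat and J :: "(nat \<Rightarrow> nat) set" and p :: "real poly" and \<beta> :: "nat \<Rightarrow> nat"
  assumes "borel_fixed n J"
    and "msat n J = J"
    and "has_hilb_poly n J p"
    and "r = gotzmann_number p"
    and "\<beta> \<in> J \<inter> mons_deg n r"
    and "\<forall>a \<in> J \<inter> mons_deg n r. borel_le n a \<beta> \<longrightarrow> a = \<beta>"
    and "0 < \<beta> 0"
  shows "borel_fixed n (msat n (mgen n ((J \<inter> mons_deg n r) - {\<beta>})))
       \<and> has_hilb_poly n (msat n (mgen n ((J \<inter> mons_deg n r) - {\<beta>}))) (p + 1)"
proof -
  note bf = assms(1) and sat = assms(2) and hp = assms(3)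
  have mi: "mon_ideal n J" using bf by (rule bf_mi)
  obtain as where gd: "gotzmann_decomp p as"
    and reg: "\<forall>a\<in>J. \<exists>v. mdvd v a \<and> v \<in> J \<and> mdeg n v \<le> length as"
    using regularity[OF bf sat hp] by blast
  have rl: "r = length as" using assms(4) gotz_unique[OF gd] by simp
  define G where "G = (J \<inter> mons_deg n r) - {\<beta>}"
  define Ig where "Ig = mgen n G"
  define I where "I = msat n Ig"
  have \<beta>J: "\<beta> \<in> J" and \<beta>m: "\<beta> \<in> mons n" and \<beta>d: "mdeg n \<beta> = r"
    using assms(5) unfolding mons_deg_def by auto
  have Gmin: "s = \<beta>" if "s \<in> J \<inter> mons_deg n r" "borel_le n s \<beta>" for s
    using assms(6) that by blast
  have GJ: "G \<subseteq> J" unfolding G_def by auto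
  have IgJ: "Ig \<subseteq> J"
  proof
    fix a assume "a \<in> Ig"
    then obtain s where s: "s \<in> G" "mdvd s a" "a \<in> mons n" unfolding Ig_def mgen_def by blast
    then show "a \<in> J" using ideal_up[OF mi _ s(3) s(2)] GJ by blast
  qed
  have IJ: "I \<subseteq> J"
  proof
    fix a assume "a \<in> I"
    then obtain k where a: "a \<in> mons n" "\<forall>m\<in>mons_deg n k. (\<lambda>i. a i + m i) \<in> Ig"
      unfolding I_def msat_def by blast
    then have "a \<in> msat n J" unfolding msat_def using IgJ by blast
    then show "a \<in> J" using sat by simp
  qed
  have part1: "borel_fixed n I"
    unfolding borel_fixed_def mon_ideal_def
  proof (intro conjI ballI allI impI)
    show "I \<subseteq> mons n" unfolding I_def msat_def by auto
  next
    fix a b assume a: "a \<in> I" and b: "b \<in> mons n"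
    obtain k where ak: "a \<in> mons n" "\<forall>m\<in>mons_deg n k. (\<lambda>i. a i + m i) \<in> Ig"
      using a unfolding I_def msat_def by blast
    have abm: "(\<lambda>i. a i + b i) \<in> mons n" using ak(1) b unfolding mons_def by auto
    have "(\<lambda>i. (a i + b i) + m i) \<in> Ig" if m: "m \<in> mons_deg n k" for m
    proof -
      obtain s where s: "s \<in> G" "mdvd s (\<lambda>i. a i + m i)"
        using ak(2) m unfolding Ig_def mgen_def by blast
      have "(\<lambda>i. (a i + b i) + m i) \<in> mons n" using abm m unfolding mons_deg_def mons_def by auto
      moreover have "mdvd s (\<lambda>i. (a i + b i) + m i)" using s(2) unfolding mdvd_def
        by (metis add.commute le_add2 le_trans trans_le_add1 add.assoc)
      ultimately show ?thesis using s(1) unfolding Ig_def mgen_def by blast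
    qed
    then show "(\<lambda>i. a i + b i) \<in> I" using abm unfolding I_def msat_def by blast
  next
    fix a i j assume a: "a \<in> I" and ij: "0 < a i \<and> i < j \<and> j \<le> n"
    obtain k where ak: "a \<in> mons n" "\<forall>m\<in>mons_deg n k. (\<lambda>i. a i + m i) \<in> Ig"
      using a unfolding I_def msat_def by blast
    have mm: "mmove a i j \<in> mons n" using mmove_mons[OF ak(1)] ij by simp
    have "(\<lambda>l. mmove a i j l + m l) \<in> Ig" if m: "m \<in> mons_deg n k" for m
    proof -
      define am where "am = (\<lambda>l. a l + m l)"
      obtain s where s: "s \<in> G" "mdvd s am"
        using ak(2) m unfolding Ig_def mgen_def am_def by blast
      have amm: "am \<in> mons n" using ak(1) m unfolding am_def mons_deg_def mons_def by auto
      have eq: "(\<lambda>l. mmove a i j l + m l) = mmove am i j"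
        using ij unfolding am_def mmove_def by (auto simp: fun_eq_iff)
      have tm: "mmove am i j \<in> mons n" using mmove_mons[OF amm] ij by simp
      have "\<exists>s'\<in>G. mdvd s' (mmove am i j)"
      proof (cases "s i < am i")
        case True
        then have "mdvd s (mmove am i j)" using s(2) ij unfolding mdvd_def mmove_def by (auto intro: le_SucI)
        then show ?thesis using s(1) by blast
      next
        case False
        then have si: "s i = am i" using s(2) unfolding mdvd_def by (simp add: le_antisym)
        have spos: "0 < s i" using si ij unfolding am_def by simp
        have sJ: "s \<in> J" "s \<in> mons_deg n r" "s \<noteq> \<beta>" using s(1) unfolding G_def by auto
        have sm: "s \<in> mons n" "mdeg n s = r" using sJ(2) unfolding mons_deg_def by auto
        have s'J: "mmove s i j \<in> J" using ij by (intro bf_move[OF bf sJ(1) spos]) auto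
        have s'd: "mmove s i j \<in> mons_deg n r" unfolding mons_deg_def
          using mmove_mons[OF sm(1)] mdeg_mmove[of s i n j, OF spos] ij sm(2) by auto
        have "mmove s i j \<noteq> \<beta>"
        proof
          assume e: "mmove s i j = \<beta>"
          have "borel_le n s (mmove s i j)" using ij by (intro borel_le_mmove[OF sm(1) spos]) auto
          then have "s = \<beta>" using Gmin[of s] sJ e by simp
          then show False using sJ by simp
        qed
        then have "mmove s i j \<in> G" unfolding G_def using s'J s'd by simp
        moreover have "mdvd (mmove s i j) (mmove am i j)" using s(2) si ij
          unfolding mdvd_def mmove_def by auto
        ultimately show ?thesis by blast
      qed
      then show ?thesis unfolding eq Ig_def mgen_def using tm by blast
    qed
    then show "mmove a i j \<in> I" using mm unfolding I_def msat_def by blast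
  qed
  define bt where "bt t = \<beta>(0 := \<beta> 0 + (t - r))" for t
  have btm: "bt t \<in> mons_deg n t" if "r \<le> t" for t
  proof -
    have "mdeg n (bt t) + \<beta> 0 = mdeg n \<beta> + (\<beta> 0 + (t - r))" unfolding bt_def by (rule mdeg_upd) simp
    then have "mdeg n (bt t) = t" using \<beta>d that by simp
    moreover have "bt t \<in> mons n" using \<beta>m unfolding bt_def mons_def by auto
    ultimately show ?thesis unfolding mons_deg_def by simp
  qed
  have btJ: "bt t \<in> J" for t
  proof -
    have "bt t \<in> mons n" using \<beta>m unfolding bt_def mons_def by auto
    moreover have "mdvd \<beta> (bt t)" unfolding bt_def mdvd_def by auto
    ultimately show ?thesis using ideal_up[OF mi \<beta>J] by blast
  qed
  have btI: "bt t \<notin> I" for t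
  proof
    assume "bt t \<in> I"
    then obtain k where k: "\<forall>m\<in>mons_deg n k. (\<lambda>i. bt t i + m i) \<in> Ig"
      unfolding I_def msat_def by blast
    define m0 where "m0 = (\<lambda>l::nat. if l = 0 then k else (0::nat))"
    have "m0 \<in> mons_deg n k" unfolding mons_deg_def mons_def mdeg_def m0_def
      by (simp add: sum.delta)
    then have "(\<lambda>i. bt t i + m0 i) \<in> Ig" using k by blast
    then obtain s where s: "s \<in> G" "mdvd s (\<lambda>i. bt t i + m0 i)" unfolding Ig_def mgen_def by blast
    have sJ: "s \<in> J \<inter> mons_deg n r" "s \<noteq> \<beta>" using s(1) unfolding G_def by auto
    have sm: "s \<in> mons n" "mdeg n s = r" using sJ(1) unfolding mons_deg_def by auto
    have "\<forall>l>0. s l \<le> \<beta> l"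
    proof (intro allI impI)
      fix l :: nat assume "0 < l"
      then show "s l \<le> \<beta> l" using s(2)[unfolded mdvd_def, rule_format, of l] unfolding bt_def m0_def by simp
    qed
    then have "borel_le n s \<beta>" using to_borel[OF \<beta>m sm(1)] sm(2) \<beta>d by simp
    then have "s = \<beta>" using Gmin sJ(1) by blast
    then show False using sJ(2) by simp
  qed
  have inI: "a \<in> I" if t: "r \<le> t" and a: "a \<in> mons_deg n t" "a \<in> J" "a \<noteq> bt t" for a t
  proof -
    have am: "a \<in> mons n" "mdeg n a = t" using a unfolding mons_deg_def by auto
    obtain v where v: "mdvd v a" "v \<in> J" "mdeg n v \<le> r" using reg a(2) rl by blast
    obtain w where w: "mdvd v w" "mdvd w a" "mdeg n w = r"
      using interm[OF v(1) am(1), of r] v(3) t am(2) by blast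
    have wm: "w \<in> mons n" using mons_down[OF w(2) am(1)] .
    have wJ: "w \<in> J" using ideal_up[OF mi v(2) wm w(1)] .
    have "a \<in> Ig"
    proof (cases "w = \<beta>")
      case False
      then have "w \<in> G" unfolding G_def mons_deg_def using wJ wm w(3) by simp
      then show ?thesis unfolding Ig_def mgen_def using w(2) am(1) by blast
    next
      case True
      then have \<beta>a: "mdvd \<beta> a" using w(2) by simp
      have "\<exists>j\<in>{1..n}. \<beta> j < a j"
      proof (rule ccontr)
        assume "\<not> (\<exists>j\<in>{1..n}. \<beta> j < a j)"
        have eqs: "\<forall>j\<in>{1..n}. a j = \<beta> j"
        proof
          fix j assume j: "j \<in> {1..n}"
          then have "\<not> \<beta> j < a j" using \<open>\<not> (\<exists>j\<in>{1..n}. \<beta> j < a j)\<close> by blast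
          moreover have "\<beta> j \<le> a j" using \<beta>a unfolding mdvd_def by blast
          ultimately show "a j = \<beta> j" by simp
        qed
        then have "(\<Sum>i\<in>{1..n}. a i) = (\<Sum>i\<in>{1..n}. \<beta> i)" by simp
        then have a0: "a 0 = \<beta> 0 + (t - r)" using mdeg_split[of n a] mdeg_split[of n \<beta>] am(2) \<beta>d t by simp
        have "a = bt t"
        proof
          fix l show "a l = bt t l"
          proof (cases "l \<le> n")
            case True then show ?thesis using eqs a0 unfolding bt_def by (cases l) auto
          next
            case False then show ?thesis using am(1) \<beta>m unfolding bt_def mons_def by auto
          qed
        qed
        then show False using a(3) by simp
      qed
      then obtain j where j: "j \<in> {1..n}" "\<beta> j < a j" by blast
      have w'J: "mmove \<beta> 0 j \<in> J" using j by (intro bf_move[OF bf \<beta>J assms(7)]) auto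
      have w'd: "mmove \<beta> 0 j \<in> mons_deg n r" unfolding mons_deg_def
        using mmove_mons[OF \<beta>m] mdeg_mmove[of \<beta> 0 n j, OF assms(7)] j \<beta>d by auto
      have "mmove \<beta> 0 j \<noteq> \<beta>"
      proof
        assume "mmove \<beta> 0 j = \<beta>"
        then have "(mmove \<beta> 0 j) j = \<beta> j" by simp
        then show False using j unfolding mmove_def by auto
      qed
      then have "mmove \<beta> 0 j \<in> G" unfolding G_def using w'J w'd by simp
      moreover have "mdvd (mmove \<beta> 0 j) a"
        unfolding mdvd_def
      proof
        fix l
        have "\<beta> l \<le> a l" using \<beta>a unfolding mdvd_def by blast
        then show "mmove \<beta> 0 j l \<le> a l" using j unfolding mmove_def by auto
      qed
      ultimately show ?thesis unfolding Ig_def mgen_def using am(1) by blast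
    qed
    have "\<forall>m\<in>mons_deg n 0. (\<lambda>i. a i + m i) \<in> Ig"
    proof
      fix m assume "m \<in> mons_deg n 0"
      then have "m = (\<lambda>_. 0)" by (rule mons_deg0)
      then show "(\<lambda>i. a i + m i) \<in> Ig" using \<open>a \<in> Ig\<close> by simp
    qed
    then show ?thesis unfolding I_def msat_def using am(1) by blast
  qed
  have hI: "hilb_fun n I t = hilb_fun n J t + 1" if t: "r \<le> t" for t
  proof -
    have "mons_deg n t - I = insert (bt t) (mons_deg n t - J)"
    proof
      show "mons_deg n t - I \<subseteq> insert (bt t) (mons_deg n t - J)"
        using inI[OF t] by blast
      show "insert (bt t) (mons_deg n t - J) \<subseteq> mons_deg n t - I"
        using btm[OF t] btI IJ by blast
    qed
    moreover have "bt t \<notin> mons_deg n t - J" using btJ by simp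
    moreover have "finite (mons_deg n t - J)" using finite_mons_deg by simp
    ultimately show ?thesis unfolding hilb_fun_def by simp
  qed
  obtain t0 where t0: "\<forall>t\<ge>t0. real (hilb_fun n J t) = poly p (real t)"
    using hp unfolding has_hilb_poly_def by blast
  have "\<forall>t\<ge>t0 + r. real (hilb_fun n I t) = poly (p + 1) (real t)"
  proof (intro allI impI)
    fix t assume "t0 + r \<le> t"
    then show "real (hilb_fun n I t) = poly (p + 1) (real t)" using hI[of t] t0 by simp
  qed
  then have "has_hilb_poly n I (p + 1)" unfolding has_hilb_poly_def by blast
  then show ?thesis using part1 unfolding I_def Ig_def G_def by simp
qed

end
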